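(* Let $\lambda_1,\lambda_2$ be as in the context, $K\in(-1,1)$, and let $b:\mathbb{R}\to\mathbb{R}$ be the solution of $b'(v)=\sqrt{\lambda_1^2-K(\lambda_1^2\cos^2 b(v)+\lambda_2^2\sin^2 b(v))}$, $b(0)=0$. Define $g:\mathbb{C}\to\mathbb{C}$ by $g(u+iv)=e^{-\lambda_1u}e^{ib(v)}$. Then $g$ satisfies $$g_{z\bar z}=\frac{2\left[\lambda_1^2(g+\bar g)-\lambda_2^2(g-\bar g)\right]}{\lambda_1^2(g+\bar g)^2-\lambda_2^2(g-\bar g)^2}\,g_zg_{\bar z},$$ and its Hopf differential is $Q=\frac{K}{16}\,dz^2$.
   Context: Either $\lambda_1>\lambda_2>0$ or $\lambda_1=\lambda_2=1$. Here $z=u+iv$, $g_z=\frac12(g_u-ig_v)$, $g_{\bar z}=\frac12(g_u+ig_v)$. The Hopf differential associated to $g$ is the quadratic differential $Q=\dfrac{g_z\bar g_z}{\lambda_1^2(g+\bar g)^2-\lambda_2^2(g-\bar g)^2}\,dz^2$, where $\bar g_z=\partial_z(\bar g)$. *)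

theory Defs
  imports "HOL-Analysis.Analysis"
begin

definition d_u :: "(complex \<Rightarrow> complex) \<Rightarrow> complex \<Rightarrow> complex" where
  "d_u f z = vector_derivative (\<lambda>t::real. f (z + complex_of_real t)) (at 0)"

definition d_v :: "(complex \<Rightarrow> complex) \<Rightarrow> complex \<Rightarrow> complex" where
  "d_v f z = vector_derivative (\<lambda>t::real. f (z + \<i> * complex_of_real t)) (at 0)"

definition d_z :: "(complex \<Rightarrow> complex) \<Rightarrow> complex \<Rightarrow> complex" where
  "d_z f z = (d_u f z - \<i> * d_v f z) / 2"

definition d_zbar :: "(complex \<Rightarrow> complex) \<Rightarrow> complex \<Rightarrow> complex" where
  "d_zbar f z = (d_u f z + \<i> * d_v f z) / 2"

definition hopf_coeff :: "real \<Rightarrow> real \<Rightarrow> (complex \<Rightarrow> complex) \<Rightarrow> complex \<Rightarrow> complex" where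
  "hopf_coeff l1 l2 g z =
     d_z g z * d_z (\<lambda>w. cnj (g w)) z /
     ((complex_of_real l1)\<^sup>2 * (g z + cnj (g z))\<^sup>2 - (complex_of_real l2)\<^sup>2 * (g z - cnj (g z))\<^sup>2)"

end

theory Submission
  imports Defs
begin

lemma du_form:
  fixes l1 :: real and p :: "real \<Rightarrow> complex"
  shows "d_u (\<lambda>z. of_real (exp (- l1 * Re z)) * p (Im z)) z = - of_real l1 * (of_real (exp (- l1 * Re z)) * p (Im z))"
proof -
  have "((\<lambda>t::real. of_real (exp (- l1 * (Re z + t))) * p (Im z)) has_vector_derivative
        of_real (exp (- l1 * (Re z + 0)) * (- l1 * (0 + 1))) * p (Im z)) (at 0)"
    by (intro derivative_eq_intros) auto
  then show ?thesis unfolding d_u_def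
    by (intro vector_derivative_at) (simp add: algebra_simps)
qed

lemma dv_form:
  fixes l1 :: real and p p' :: "real \<Rightarrow> complex"
  assumes "\<And>v. (p has_vector_derivative p' v) (at v)"
  shows "d_v (\<lambda>z. of_real (exp (- l1 * Re z)) * p (Im z)) z = of_real (exp (- l1 * Re z)) * p' (Im z)"
proof -
  have "((\<lambda>t::real. Im z + t) has_vector_derivative 1) (at 0)"
    by (intro derivative_eq_intros) auto
  from vector_diff_chain_at[OF this, of p] assms
  have "((\<lambda>t::real. p (Im z + t)) has_vector_derivative p' (Im z)) (at 0)"
    by (simp add: o_def)
  then have "((\<lambda>t::real. of_real (exp (- l1 * Re z)) * p (Im z + t)) has_vector_derivative
        of_real (exp (- l1 * Re z)) * p' (Im z)) (at 0)"
    by (rule has_vector_derivative_mult_right)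
  then show ?thesis unfolding d_v_def
    by (intro vector_derivative_at) simp
qed

lemma alg1:
  fixes w cw r B B' C S L1 L2 K :: complex
  assumes "w = C + \<i> * S" "cw = C - \<i> * S"
    "B^2 = L1^2 - K * (L1^2 * C^2 + L2^2 * S^2)" "B' = K * (L1^2 - L2^2) * S * C"
  shows "(- L1 * (r * (w * ((B - L1) / 2))) + \<i> * (r * (\<i> * B * w * ((B - L1)/2) + w * (B'/2)))) / 2
     * (L1^2 * (r*w + r*cw)^2 - L2^2 * (r*w - r*cw)^2)
     = 2 * (L1^2 * (r*w + r*cw) - L2^2 * (r*w - r*cw)) * (r * w * (B - L1) / 2) * (r * w * (- (L1 + B)) / 2)"
proof -
  have i2: "\<i> * \<i> = (-1::complex)" by simp
  have e1: "(- L1 * (r * (w * ((B - L1) / 2))) + \<i> * (r * (\<i> * B * w * ((B - L1)/2) + w * (B'/2)))) / 2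
      = r * w / 4 * (L1^2 - B^2 + \<i> * B')"
    by (simp add: field_simps power2_eq_square)
  have s1: "r*w + r*cw = 2 * r * C" unfolding assms(1,2) by (simp add: algebra_simps)
  have s2: "r*w - r*cw = 2 * \<i> * r * S" unfolding assms(1,2) by (simp add: algebra_simps)
  have e2: "L1^2 * (r*w + r*cw)^2 - L2^2 * (r*w - r*cw)^2 = 4 * r^2 * (L1^2 * C^2 + L2^2 * S^2)"
    unfolding s1 s2 by (simp add: power2_eq_square algebra_simps)
  have e3: "2 * (L1^2 * (r*w + r*cw) - L2^2 * (r*w - r*cw)) = 4 * r * (L1^2 * C - \<i> * L2^2 * S)"
    unfolding s1 s2 by (simp add: power2_eq_square algebra_simps)
  have e4: "(r * w * (B - L1) / 2) * (r * w * (- (L1 + B)) / 2) = r^2 * w^2 * (L1^2 - B^2) / 4"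
    by (simp add: power2_eq_square algebra_simps)
  have e5: "w * (L1^2 * C - \<i> * L2^2 * S) = (L1^2 * C^2 + L2^2 * S^2) + \<i> * (L1^2 - L2^2) * S * C"
    using assms(1) by (simp add: power2_eq_square algebra_simps)
  define D where "D = L1^2 * C^2 + L2^2 * S^2"
  have kb: "L1^2 - B^2 = K * D" using assms(3) unfolding D_def by simp
  have L: "(- L1 * (r * (w * ((B - L1) / 2))) + \<i> * (r * (\<i> * B * w * ((B - L1)/2) + w * (B'/2)))) / 2
     * (L1^2 * (r*w + r*cw)^2 - L2^2 * (r*w - r*cw)^2) = r * w / 4 * (K * D + \<i> * (K * (L1\<^sup>2 - L2\<^sup>2) * S * C)) * (4 * r\<^sup>2 * D)"
    unfolding e1 e2 D_def[symmetric] unfolding kb assms(4) ..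
  have R: "2 * (L1^2 * (r*w + r*cw) - L2^2 * (r*w - r*cw)) * (r * w * (B - L1) / 2) * (r * w * (- (L1 + B)) / 2)
     = 4 * r * (L1^2 * C - \<i> * L2^2 * S) * (r^2 * w^2 * (K * D) / 4)"
  proof -
    have "2 * (L1^2 * (r*w + r*cw) - L2^2 * (r*w - r*cw)) * (r * w * (B - L1) / 2) * (r * w * (- (L1 + B)) / 2)
      = (2 * (L1^2 * (r*w + r*cw) - L2^2 * (r*w - r*cw))) * ((r * w * (B - L1) / 2) * (r * w * (- (L1 + B)) / 2))"
      by (simp only: mult.assoc)
    then show ?thesis by (simp only: e3 e4 kb)
  qed
  have "4 * r * (L1^2 * C - \<i> * L2^2 * S) * (r^2 * w^2 * (K * D) / 4)
      = r^3 * w * K * D * (w * (L1^2 * C - \<i> * L2^2 * S))"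
    by (simp add: power2_eq_square power3_eq_cube algebra_simps)
  also have "\<dots> = r^3 * w * K * D * (D + \<i> * (L1^2 - L2^2) * S * C)"
    unfolding e5 D_def ..
  also have "\<dots> = r * w / 4 * (K * D + \<i> * (K * (L1\<^sup>2 - L2\<^sup>2) * S * C)) * (4 * r\<^sup>2 * D)"
    by (simp add: power2_eq_square power3_eq_cube algebra_simps)
  finally show ?thesis unfolding L R by (rule sym)
qed



lemma alg1b:
  fixes w cw r B B' C S L1 L2 K :: complex
  assumes "w = C + \<i> * S" "cw = C - \<i> * S"
    "B^2 = L1^2 - K * (L1^2 * C^2 + L2^2 * S^2)" "B' = K * (L1^2 - L2^2) * S * C"
    "r \<noteq> 0" "L1^2 * C^2 + L2^2 * S^2 \<noteq> 0"
  shows "(- L1 * (r * (w * ((B - L1) / 2))) + \<i> * (r * (w * (B'/2) + \<i> * B * w * ((B - L1)/2)))) / 2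
     = 2 * (L1^2 * (r*w + r*cw) - L2^2 * (r*w - r*cw)) / (L1^2 * (r*w + r*cw)^2 - L2^2 * (r*w - r*cw)^2)
       * (r * (w * ((B - L1) / 2))) * (r * w * (- (L1 + B)) / 2)"
proof -
  have s1: "r*w + r*cw = 2 * r * C" unfolding assms(1,2) by (simp add: algebra_simps)
  have s2: "r*w - r*cw = 2 * \<i> * r * S" unfolding assms(1,2) by (simp add: algebra_simps)
  have e2: "L1^2 * (r*w + r*cw)^2 - L2^2 * (r*w - r*cw)^2 = 4 * r^2 * (L1^2 * C^2 + L2^2 * S^2)"
    unfolding s1 s2 by (simp add: power2_eq_square algebra_simps)
  have nz: "L1^2 * (r*w + r*cw)^2 - L2^2 * (r*w - r*cw)^2 \<noteq> 0"
    unfolding e2 using assms(5,6) by simp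
  show ?thesis using alg1[OF assms(1-4), of r] nz
    by (simp add: field_simps)
qed

lemma alg2:
  fixes w cw r B C S L1 L2 K :: complex
  assumes "w = C + \<i> * S" "cw = C - \<i> * S" "C^2 + S^2 = 1"
    "B^2 = L1^2 - K * (L1^2 * C^2 + L2^2 * S^2)"
    "r \<noteq> 0" "L1^2 * C^2 + L2^2 * S^2 \<noteq> 0"
  shows "(r * (w * ((B - L1) / 2))) * ((- L1 * (r * cw) - \<i> * (r * (- \<i> * B * cw))) / 2)
     / (L1^2 * (r*w + r*cw)^2 - L2^2 * (r*w - r*cw)^2) = K / 16"
proof -
  define D where "D = L1^2 * C^2 + L2^2 * S^2"
  have s1: "r*w + r*cw = 2 * r * C" unfolding assms(1,2) by (simp add: algebra_simps)
  have s2: "r*w - r*cw = 2 * \<i> * r * S" unfolding assms(1,2) by (simp add: algebra_simps)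
  have e2: "L1^2 * (r*w + r*cw)^2 - L2^2 * (r*w - r*cw)^2 = 4 * r^2 * D"
    unfolding s1 s2 D_def by (simp add: power2_eq_square algebra_simps)
  have wc: "w * cw = 1" unfolding assms(1,2) using assms(3)
    by (simp add: power2_eq_square algebra_simps)
  have kb: "L1^2 - B^2 = K * D" using assms(4) unfolding D_def by simp
  have "(r * (w * ((B - L1) / 2))) * ((- L1 * (r * cw) - \<i> * (r * (- \<i> * B * cw))) / 2)
     = r^2 * (w * cw) * (L1^2 - B^2) / 4"
    by (simp add: power2_eq_square algebra_simps)
  also have "\<dots> = r^2 * K * D / 4" unfolding wc kb by simp
  finally have X: "(r * (w * ((B - L1) / 2))) * ((- L1 * (r * cw) - \<i> * (r * (- \<i> * B * cw))) / 2)
     = r^2 * K * D / 4" .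
  have "D \<noteq> 0" using assms(6) unfolding D_def .
  then show ?thesis unfolding e2 X using assms(5) by (simp add: field_simps)
qed

theorem proposition4p2:
  fixes l1 l2 K :: real and b :: "real \<Rightarrow> real" and g :: "complex \<Rightarrow> complex"
  assumes lam: "(l1 > l2 \<and> l2 > 0) \<or> (l1 = 1 \<and> l2 = 1)"
    and K: "-1 < K" "K < 1"
    and b_ode: "\<And>v. (b has_real_derivative
         sqrt (l1\<^sup>2 - K * (l1\<^sup>2 * (cos (b v))\<^sup>2 + l2\<^sup>2 * (sin (b v))\<^sup>2))) (at v)"
    and b0: "b 0 = 0"
    and g_def: "\<And>z. g z = exp (complex_of_real (- l1 * Re z)) * exp (\<i> * complex_of_real (b (Im z)))"
  shows "(\<forall>z. d_zbar (d_z g) z =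
           2 * ((complex_of_real l1)\<^sup>2 * (g z + cnj (g z)) - (complex_of_real l2)\<^sup>2 * (g z - cnj (g z)))
           / ((complex_of_real l1)\<^sup>2 * (g z + cnj (g z))\<^sup>2 - (complex_of_real l2)\<^sup>2 * (g z - cnj (g z))\<^sup>2)
           * d_z g z * d_zbar g z)
     \<and> (\<forall>z. hopf_coeff l1 l2 g z = complex_of_real (K / 16))"
proof -
  have l1p: "l1 > 0" and l2p: "l2 > 0" and l12: "l2 \<le> l1" using lam by auto
  define F where "F x = l1\<^sup>2 - K * (l1\<^sup>2 * (cos x)\<^sup>2 + l2\<^sup>2 * (sin x)\<^sup>2)" for x
  define B where "B v = sqrt (F (b v))" for v
  define Bd where "Bd v = K * (l1\<^sup>2 - l2\<^sup>2) * sin (b v) * cos (b v)" for v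
  have Dpos: "l1\<^sup>2 * (cos x)\<^sup>2 + l2\<^sup>2 * (sin x)\<^sup>2 > 0" for x
  proof -
    have "l2\<^sup>2 \<le> l1\<^sup>2" using l12 l2p by (intro power_mono) auto
    then have "l2\<^sup>2 * (cos x)\<^sup>2 \<le> l1\<^sup>2 * (cos x)\<^sup>2" by (rule mult_right_mono) simp
    then have "l2\<^sup>2 * ((cos x)\<^sup>2 + (sin x)\<^sup>2) \<le> l1\<^sup>2 * (cos x)\<^sup>2 + l2\<^sup>2 * (sin x)\<^sup>2"
      unfolding distrib_left by linarith
    moreover have "l2\<^sup>2 > 0" using l2p by simp
    moreover have "l2\<^sup>2 * ((cos x)\<^sup>2 + (sin x)\<^sup>2) = l2\<^sup>2" by simp
    ultimately show ?thesis by linarith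
  qed
  have Dle: "l1\<^sup>2 * (cos x)\<^sup>2 + l2\<^sup>2 * (sin x)\<^sup>2 \<le> l1\<^sup>2" for x
  proof -
    have "l2\<^sup>2 \<le> l1\<^sup>2" using l12 l2p by (intro power_mono) auto
    then have "l2\<^sup>2 * (sin x)\<^sup>2 \<le> l1\<^sup>2 * (sin x)\<^sup>2" by (rule mult_right_mono) simp
    then have "l1\<^sup>2 * (cos x)\<^sup>2 + l2\<^sup>2 * (sin x)\<^sup>2 \<le> l1\<^sup>2 * ((cos x)\<^sup>2 + (sin x)\<^sup>2)"
      unfolding distrib_left by linarith
    then show ?thesis by simp
  qed
  have Fpos: "F x > 0" for x
  proof (cases "K \<ge> 0")
    case True
    have "K * (l1\<^sup>2 * (cos x)\<^sup>2 + l2\<^sup>2 * (sin x)\<^sup>2) \<le> K * l1\<^sup>2"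
      using Dle True by (simp add: mult_left_mono)
    moreover have "K * l1\<^sup>2 < l1\<^sup>2" using K l1p by simp
    ultimately show ?thesis unfolding F_def by linarith
  next
    case False
    have "K * (l1\<^sup>2 * (cos x)\<^sup>2 + l2\<^sup>2 * (sin x)\<^sup>2) < 0"
      using Dpos[of x] False by (simp add: mult_neg_pos)
    moreover have "l1\<^sup>2 > 0" using l1p by simp
    ultimately show ?thesis unfolding F_def by linarith
  qed
  have Bpos: "B v > 0" for v unfolding B_def using Fpos by simp
  have bd: "(b has_real_derivative B v) (at v)" for v
    using b_ode[of v] unfolding B_def F_def .
  have BD: "(B has_real_derivative Bd v) (at v)" for v
  proof -
    have "((\<lambda>v. F (b v)) has_real_derivative
       (- K * (l1\<^sup>2 * (2 * cos (b v) * (- sin (b v) * B v)) + l2\<^sup>2 * (2 * sin (b v) * (cos (b v) * B v))))) (at v)"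
      unfolding F_def by (rule derivative_eq_intros bd refl | simp)+
    from DERIV_real_sqrt[OF Fpos[of "b v"]] this
    have "(B has_real_derivative inverse (sqrt (F (b v))) / 2 * (- K * (l1\<^sup>2 * (2 * cos (b v) * (- sin (b v) * B v)) + l2\<^sup>2 * (2 * sin (b v) * (cos (b v) * B v))))) (at v)"
      unfolding B_def by (rule DERIV_chain2)
    moreover have "inverse (sqrt (F (b v))) / 2 * (- K * (l1\<^sup>2 * (2 * cos (b v) * (- sin (b v) * B v)) + l2\<^sup>2 * (2 * sin (b v) * (cos (b v) * B v)))) = Bd v"
      using Bpos[of v] unfolding Bd_def B_def[symmetric] by (simp add: field_simps)
    ultimately show ?thesis by simp
  qed
  define p1 where "p1 v = exp (\<i> * complex_of_real (b v))" for v
  have p1d: "(p1 has_vector_derivative \<i> * of_real (B v) * p1 v) (at v)" for v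
  proof -
    have "((\<lambda>v. \<i> * complex_of_real (b v)) has_vector_derivative \<i> * of_real (B v)) (at v)"
      by (intro has_vector_derivative_mult_right has_vector_derivative_of_real bd)
    from field_vector_diff_chain_at[OF this DERIV_exp]
    show ?thesis unfolding p1_def by (simp add: o_def mult.commute)
  qed
  have gf: "g = (\<lambda>z. of_real (exp (- l1 * Re z)) * p1 (Im z))"
    by (rule ext) (simp only: g_def p1_def exp_of_real)
  have dug: "d_u g z = - of_real l1 * (of_real (exp (- l1 * Re z)) * p1 (Im z))" for z
    unfolding gf by (rule du_form)
  have dvg: "d_v g z = of_real (exp (- l1 * Re z)) * (\<i> * of_real (B (Im z)) * p1 (Im z))" for z
    unfolding gf by (rule dv_form[OF p1d])
  define p2 where "p2 v = p1 v * of_real ((B v - l1) / 2)" for v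
  have dzg: "d_z g = (\<lambda>z. of_real (exp (- l1 * Re z)) * p2 (Im z))"
    by (rule ext) (simp add: d_z_def dug dvg p2_def field_simps)
  have dzbarg: "d_zbar g z = of_real (exp (- l1 * Re z)) * p1 (Im z) * (- (of_real l1 + of_real (B (Im z)))) / 2" for z
    by (simp add: d_zbar_def dug dvg field_simps)
  have p2d: "(p2 has_vector_derivative p1 v * of_real (Bd v / 2) + \<i> * of_real (B v) * p1 v * of_real ((B v - l1) / 2)) (at v)" for v
  proof -
    have dd: "((\<lambda>v. (B v - l1) / 2) has_real_derivative Bd v / 2) (at v)"
      by (rule derivative_eq_intros BD refl | simp)+
    show ?thesis unfolding p2_def
      by (rule has_vector_derivative_mult[OF p1d has_vector_derivative_of_real[OF dd]])
  qed
  have dzz: "d_zbar (d_z g) z = (- of_real l1 * (of_real (exp (- l1 * Re z)) * p2 (Im z)) + \<i> * (of_real (exp (- l1 * Re z)) *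
      (p1 (Im z) * of_real (Bd (Im z) / 2) + \<i> * of_real (B (Im z)) * p1 (Im z) * of_real ((B (Im z) - l1) / 2)))) / 2" for z
    unfolding d_zbar_def dzg du_form dv_form[OF p2d] ..
  define p3 where "p3 v = cnj (p1 v)" for v
  have p3d: "(p3 has_vector_derivative - \<i> * of_real (B v) * p3 v) (at v)" for v
    using has_vector_derivative_cnj[OF p1d[of v]] unfolding p3_def by simp
  have cg: "(\<lambda>w. cnj (g w)) = (\<lambda>z. of_real (exp (- l1 * Re z)) * p3 (Im z))"
    by (rule ext) (simp add: gf p3_def)
  have dzc: "d_z (\<lambda>w. cnj (g w)) z = (- of_real l1 * (of_real (exp (- l1 * Re z)) * p3 (Im z))
      - \<i> * (of_real (exp (- l1 * Re z)) * (- \<i> * of_real (B (Im z)) * p3 (Im z)))) / 2" for z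
    unfolding d_z_def cg du_form dv_form[OF p3d] ..
  show ?thesis
  proof (intro conjI allI)
    fix z
    define v where "v = Im z"
    define r where "r = complex_of_real (exp (- l1 * Re z))"
    define w where "w = p1 v"
    define cw where "cw = p3 v"
    define C where "C = complex_of_real (cos (b v))"
    define S where "S = complex_of_real (sin (b v))"
    have hw: "w = C + \<i> * S"
      unfolding w_def p1_def C_def S_def by (simp add: cis_conv_exp[symmetric] complex_eq_iff)
    have hcw: "cw = C - \<i> * S"
      unfolding cw_def p3_def p1_def C_def S_def by (simp add: cis_conv_exp[symmetric] complex_eq_iff)
    have hCS: "C^2 + S^2 = 1"
    proof -
      have "complex_of_real ((cos (b v))\<^sup>2 + (sin (b v))\<^sup>2) = 1" by simp
      then show ?thesis unfolding C_def S_def by (simp only: of_real_add of_real_power)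
    qed
    have hB: "(complex_of_real (B v))^2 = (of_real l1)^2 - of_real K * ((of_real l1)^2 * C^2 + (of_real l2)^2 * S^2)"
    proof -
      have "(B v)^2 = F (b v)" unfolding B_def using Fpos[of "b v"] by simp
      then have "complex_of_real ((B v)^2) = complex_of_real (F (b v))" by simp
      then show ?thesis unfolding C_def S_def F_def
        by (simp only: of_real_add of_real_power of_real_diff of_real_mult)
    qed
    have hBd: "complex_of_real (Bd v) = of_real K * ((of_real l1)^2 - (of_real l2)^2) * S * C"
      unfolding Bd_def C_def S_def by simp
    have hr: "r \<noteq> 0" unfolding r_def by simp
    have hD: "(of_real l1)^2 * C^2 + (of_real l2)^2 * S^2 \<noteq> (0::complex)"
    proof -
      have "(of_real l1)^2 * C^2 + (of_real l2)^2 * S^2 = complex_of_real (l1\<^sup>2 * (cos (b v))\<^sup>2 + l2\<^sup>2 * (sin (b v))\<^sup>2)"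
        unfolding C_def S_def by (simp only: of_real_add of_real_mult of_real_power)
      then show ?thesis using Dpos[of "b v"] by (metis of_real_eq_0_iff less_irrefl)
    qed
    have gz: "g z = r * w" unfolding gf r_def w_def v_def ..
    have cgz: "cnj (g z) = r * cw" unfolding gz cw_def p3_def w_def r_def by simp
    have p2v: "p2 v = w * ((of_real (B v) - of_real l1) / 2)" unfolding p2_def w_def by simp
    note A1 = alg1b[OF hw hcw hB hBd hr hD]
    show "d_zbar (d_z g) z =
           2 * ((complex_of_real l1)\<^sup>2 * (g z + cnj (g z)) - (complex_of_real l2)\<^sup>2 * (g z - cnj (g z)))
           / ((complex_of_real l1)\<^sup>2 * (g z + cnj (g z))\<^sup>2 - (complex_of_real l2)\<^sup>2 * (g z - cnj (g z))\<^sup>2)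
           * d_z g z * d_zbar g z"
    proof -
      have lhs: "d_zbar (d_z g) z = (- of_real l1 * (r * (w * ((of_real (B v) - of_real l1) / 2))) + \<i> * (r * (w * (of_real (Bd v) / 2) + \<i> * of_real (B v) * w * ((of_real (B v) - of_real l1) / 2)))) / 2"
        unfolding dzz v_def[symmetric] r_def[symmetric] w_def[symmetric] p2v
        by (simp only: of_real_divide of_real_diff of_real_numeral)
      have dz1: "d_z g z = r * (w * ((of_real (B v) - of_real l1) / 2))"
        unfolding dzg v_def[symmetric] r_def[symmetric] p2v ..
      have dzb1: "d_zbar g z = r * w * (- (of_real l1 + of_real (B v))) / 2"
        unfolding dzbarg v_def[symmetric] r_def[symmetric] w_def[symmetric] ..
      show ?thesis unfolding lhs dz1 dzb1 cgz unfolding gz by (rule A1)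
    qed
    show "hopf_coeff l1 l2 g z = complex_of_real (K / 16)"
    proof -
      have dz1: "d_z g z = r * (w * ((of_real (B v) - of_real l1) / 2))"
        unfolding dzg v_def[symmetric] r_def[symmetric] p2v ..
      have dzc1: "d_z (\<lambda>w. cnj (g w)) z = (- of_real l1 * (r * cw) - \<i> * (r * (- \<i> * of_real (B v) * cw))) / 2"
        unfolding dzc v_def[symmetric] r_def[symmetric] cw_def[symmetric] ..
      show ?thesis unfolding hopf_coeff_def dz1 dzc1 cgz of_real_divide of_real_numeral unfolding gz
        by (rule alg2[OF hw hcw hCS hB hr hD])
    qed
  qed
qed

end
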